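(* Let $F:\mathbb{S}^{m_1}\times\mathbb{H}^{m_2}\to\mathbb{H}^{n+1}\subset\mathbb{L}^{n+2}$, $n=m_1+m_2$, be the immersion of a cylinder in the hyperbolic space, with unit normal $N$, with $m_1$ principal curvatures equal to $\kappa_1>1$ and $m_2$ principal curvatures equal to $\kappa_2$, such that $\kappa_1\kappa_2=1$. Then the solution to the mean curvature flow with initial condition $F$ is given by $$\widehat F^t(x)=\cosh(\xi(t))F(x)+\sinh(\xi(t))N(x),$$ where $$\cosh(2\xi(t))=\frac{a\ell(t)-2\sqrt{q(t)}}{a^2-4},\qquad \sinh(2\xi(t))=\frac{2\ell(t)-a\sqrt{q(t)}}{a^2-4},$$ with $q(t)=\ell^2(t)-a^2+4$, $\ell(t)=(a-b)e^{-2nt}+b$, $a=\kappa_1+\kappa_2$ and $b=-\frac{m_1-m_2}{n}(\kappa_1-\kappa_2)$. $\widehat F^t$ is defined for all $t\in(-\infty,t^* )$, where $t^*=\frac{1}{2n}\ln\frac{m_1\kappa_1^2+m_2}{m_1(\kappa_1^2-1)}$, and it collapses into an $m_2$-dimensional focal submanifold at $t^*$.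
   Context: $\mathbb{H}^{n+1}$ is the hyperboloid model of hyperbolic space in the Lorentzian space $\mathbb{L}^{n+2}$. Second fundamental form $h(v,w)=-\langle dN(v),dF(w)\rangle$, principal curvatures are its eigenvalues, mean curvature $H=\sum_i\kappa_i$. A family $\widehat F:M\times I\to\mathbb{H}^{n+1}$, $0\in I$, solves the mean curvature flow with initial condition $F$ if $\partial_t\widehat F=\widehat H\widehat N$ and $\widehat F(\cdot,0)=F$, where $\widehat N^t$ is a unit normal of $\widehat F^t$ and $\widehat H^t$ the corresponding mean curvature. *)

theory Defs
  imports "HOL-Analysis.Analysis"
begin

text \<open>Lorentzian space L^{n+2} is modelled as real \<times> 'v with DIM('v) = n+1;
  the first component is the time coordinate.\<close>

definition lor :: "real \<times> 'v::euclidean_space \<Rightarrow> real \<times> 'v \<Rightarrow> real" where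
  "lor x y = - fst x * fst y + snd x \<bullet> snd y"

definition hyperbolic_space :: "(real \<times> 'v::euclidean_space) set" where
  "hyperbolic_space = {x. lor x x = -1 \<and> fst x > 0}"

text \<open>F : U \<rightarrow> H^{n+1} is an immersion (U an open parameter domain, a chart of M).\<close>
definition immersion_H :: "'m::euclidean_space set \<Rightarrow> ('m \<Rightarrow> real \<times> 'v::euclidean_space) \<Rightarrow> bool" where
  "immersion_H U F \<longleftrightarrow> open U \<and>
     (\<forall>p\<in>U. F differentiable (at p) \<and> F p \<in> hyperbolic_space \<and>
            inj (frechet_derivative F (at p)))"

definition unit_normal :: "'m::euclidean_space set \<Rightarrow> ('m \<Rightarrow> real \<times> 'v::euclidean_space)
    \<Rightarrow> ('m \<Rightarrow> real \<times> 'v) \<Rightarrow> bool" where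
  "unit_normal U F N \<longleftrightarrow>
     (\<forall>p\<in>U. N differentiable (at p) \<and> lor (N p) (N p) = 1 \<and> lor (N p) (F p) = 0 \<and>
            (\<forall>v. lor (N p) (frechet_derivative F (at p) v) = 0))"

definition sff :: "('m::euclidean_space \<Rightarrow> real \<times> 'v::euclidean_space) \<Rightarrow> ('m \<Rightarrow> real \<times> 'v)
    \<Rightarrow> 'm \<Rightarrow> 'm \<Rightarrow> 'm \<Rightarrow> real" where
  "sff F N p v w = - lor (frechet_derivative N (at p) v) (frechet_derivative F (at p) w)"

definition ind_metric :: "('m::euclidean_space \<Rightarrow> real \<times> 'v::euclidean_space) \<Rightarrow> 'm \<Rightarrow> 'm \<Rightarrow> 'm \<Rightarrow> real" where
  "ind_metric F p v w = lor (frechet_derivative F (at p) v) (frechet_derivative F (at p) w)"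

text \<open>Eigenspace of h (with respect to the induced metric) for the value k;
  k is a principal curvature iff this space is nonzero, its multiplicity is the dimension.\<close>
definition princ_eigenspace :: "('m::euclidean_space \<Rightarrow> real \<times> 'v::euclidean_space) \<Rightarrow> ('m \<Rightarrow> real \<times> 'v)
    \<Rightarrow> 'm \<Rightarrow> real \<Rightarrow> 'm set" where
  "princ_eigenspace F N p k = {v. \<forall>w. sff F N p v w = k * ind_metric F p v w}"

definition mean_curvature :: "('m::euclidean_space \<Rightarrow> real \<times> 'v::euclidean_space) \<Rightarrow> ('m \<Rightarrow> real \<times> 'v)
    \<Rightarrow> 'm \<Rightarrow> real" where
  "mean_curvature F N p =
     (\<Sum>k\<in>{k. princ_eigenspace F N p k \<noteq> {0}}. real (dim (princ_eigenspace F N p k)) * k)"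

definition mcf_solution :: "'m::euclidean_space set \<Rightarrow> real set \<Rightarrow> ('m \<Rightarrow> real \<Rightarrow> real \<times> 'v::euclidean_space)
    \<Rightarrow> ('m \<Rightarrow> real \<times> 'v) \<Rightarrow> bool" where
  "mcf_solution U I Fh F \<longleftrightarrow> 0 \<in> I \<and> (\<forall>x\<in>U. Fh x 0 = F x) \<and>
     (\<exists>Nh. \<forall>t\<in>I. immersion_H U (\<lambda>x. Fh x t) \<and> unit_normal U (\<lambda>x. Fh x t) (\<lambda>x. Nh x t) \<and>
        (\<forall>x\<in>U. ((\<lambda>s. Fh x s) has_vector_derivative
                   (mean_curvature (\<lambda>y. Fh y t) (\<lambda>y. Nh y t) x *\<^sub>R Nh x t)) (at t within I)))"

end

theory Submission
  imports Defs
begin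


lemma lor_sym: "lor x y = lor y x" by (simp add: lor_def inner_commute)
lemma lor_add_right: "lor x (y + z) = lor x y + lor x z" by (simp add: lor_def inner_add_right algebra_simps)
lemma lor_add_left: "lor (x + y) z = lor x z + lor y z" by (simp add: lor_def inner_add_left algebra_simps)
lemma lor_scale_right: "lor x (c *\<^sub>R y) = c * lor x y" by (simp add: lor_def algebra_simps)
lemma lor_scale_left: "lor (c *\<^sub>R x) y = c * lor x y" by (simp add: lor_def algebra_simps)
lemma lor_minus_right: "lor x (- y) = - lor x y" by (simp add: lor_def)
lemma lor_diff_right: "lor x (y - z) = lor x y - lor x z" by (simp add: lor_def inner_diff_right algebra_simps)
lemma lor_zero_right[simp]: "lor x 0 = 0" by (simp add: lor_def)

lemma lor_has_derivative:
  assumes "(F has_derivative L) (at p)" "(G has_derivative M) (at p)"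
  shows "((\<lambda>y. lor (F y) (G y)) has_derivative (\<lambda>v. lor (L v) (G p) + lor (F p) (M v))) (at p)"
proof -
  have f1: "((\<lambda>y. fst (F y)) has_derivative (\<lambda>v. fst (L v))) (at p)"
    using has_derivative_fst[OF assms(1)] .
  have f2: "((\<lambda>y. fst (G y)) has_derivative (\<lambda>v. fst (M v))) (at p)"
    using has_derivative_fst[OF assms(2)] .
  have s1: "((\<lambda>y. snd (F y)) has_derivative (\<lambda>v. snd (L v))) (at p)"
    using has_derivative_snd[OF assms(1)] .
  have s2: "((\<lambda>y. snd (G y)) has_derivative (\<lambda>v. snd (M v))) (at p)"
    using has_derivative_snd[OF assms(2)] .
  have "((\<lambda>y. - (fst (F y) * fst (G y)) + snd (F y) \<bullet> snd (G y)) has_derivative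
     (\<lambda>v. - (fst (F p) * fst (M v) + fst (L v) * fst (G p)) + (snd (F p) \<bullet> snd (M v) + snd (L v) \<bullet> snd (G p)))) (at p)"
    by (intro derivative_intros f1 f2 s1 s2)
  then show ?thesis
    by (simp add: lor_def algebra_simps inner_commute)
qed

lemma const_deriv_zero:
  assumes "(f has_derivative D) (at p)" "open U" "p \<in> U" "\<And>y. y \<in> U \<Longrightarrow> f y = c"
  shows "D v = 0"
proof -
  have "((\<lambda>y. c) has_derivative (\<lambda>v. 0)) (at p)" by simp
  then have "(f has_derivative (\<lambda>v. 0)) (at p)"
    by (rule has_derivative_transform_within_open[OF _ assms(2,3)]) (use assms(4) in auto)
  then have "D = (\<lambda>v. 0)" using has_derivative_unique assms(1) by blast
  then show ?thesis by simp
qed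


locale imm =
  fixes U :: "'m::euclidean_space set" and F N :: "'m \<Rightarrow> real \<times> 'v::euclidean_space"
  assumes imm: "immersion_H U F" and nor: "unit_normal U F N"
    and dims: "DIM('v) = DIM('m) + 1"
begin

lemma U_open: "open U" using imm by (simp add: immersion_H_def)

context fixes p assumes p: "p \<in> U"
begin

abbreviation "L \<equiv> frechet_derivative F (at p)"
abbreviation "M \<equiv> frechet_derivative N (at p)"

lemma hasL: "(F has_derivative L) (at p)"
  using imm p by (simp add: immersion_H_def frechet_derivative_works)
lemma hasM: "(N has_derivative M) (at p)"
  using nor p by (simp add: unit_normal_def frechet_derivative_works)
lemma linL: "linear L" using has_derivative_linear[OF hasL] .
lemma linM: "linear M" using has_derivative_linear[OF hasM] .
lemma injL: "inj L" using imm p by (simp add: immersion_H_def)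

lemma FF: "lor (F p) (F p) = -1" using imm p by (simp add: immersion_H_def hyperbolic_space_def)
lemma fstF: "fst (F p) > 0" using imm p by (simp add: immersion_H_def hyperbolic_space_def)
lemma NN: "lor (N p) (N p) = 1" using nor p by (simp add: unit_normal_def)
lemma NF: "lor (N p) (F p) = 0" using nor p by (simp add: unit_normal_def)
lemma NL: "lor (N p) (L v) = 0" using nor p by (simp add: unit_normal_def)

lemma FL: "lor (F p) (L v) = 0"
proof -
  have "lor (L v) (F p) + lor (F p) (L v) = 0"
    by (rule const_deriv_zero[OF lor_has_derivative[OF hasL hasL] U_open p, where c = "-1"])
       (use imm in \<open>auto simp: immersion_H_def hyperbolic_space_def\<close>)
  then show ?thesis by (simp add: lor_sym)
qed

lemma NM: "lor (N p) (M v) = 0"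
proof -
  have "lor (M v) (N p) + lor (N p) (M v) = 0"
    by (rule const_deriv_zero[OF lor_has_derivative[OF hasM hasM] U_open p, where c = "1"])
       (use nor in \<open>auto simp: unit_normal_def\<close>)
  then show ?thesis by (simp add: lor_sym)
qed

lemma FM: "lor (F p) (M v) = 0"
proof -
  have "lor (M v) (F p) + lor (N p) (L v) = 0"
    by (rule const_deriv_zero[OF lor_has_derivative[OF hasM hasL] U_open p, where c = "0"])
       (use nor in \<open>auto simp: unit_normal_def\<close>)
  then show ?thesis by (simp add: lor_sym NL)
qed

lemma span_full: "span (insert (F p) (insert (N p) (range L))) = UNIV"
proof -
  have sub: "subspace (range L)" using linear_subspace_image[OF linL subspace_UNIV] .
  have spL: "span (range L) = range L" using sub by simp
  have d0: "dim (range L) = DIM('m)"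
    using dim_image_eq[OF linL, of UNIV] injL by (simp add: inj_on_def dim_UNIV)
  have n1: "N p \<notin> span (range L)"
  proof
    assume "N p \<in> span (range L)"
    then obtain w where "N p = L w" using spL by auto
    then show False using NN NL[of w] by simp
  qed
  have n2: "F p \<notin> span (insert (N p) (range L))"
  proof
    assume "F p \<in> span (insert (N p) (range L))"
    then obtain c where "F p - c *\<^sub>R N p \<in> span (range L)" by (auto simp: span_insert)
    then obtain w where w: "F p - c *\<^sub>R N p = L w" using spL by auto
    have "lor (F p) (F p - c *\<^sub>R N p) = -1"
      using FF NF by (simp add: lor_diff_right lor_scale_right lor_sym)
    then show False using w FL[of w] by simp
  qed
  have "dim (insert (F p) (insert (N p) (range L))) = DIM('m) + 2"
    using n1 n2 d0 by (simp add: dim_insert)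
  also have "\<dots> = DIM(real \<times> 'v)" using dims by simp
  finally show ?thesis using dim_eq_full by blast
qed

lemma nondeg:
  assumes "lor z (F p) = 0" "lor z (N p) = 0" "\<And>w. lor z (L w) = 0"
  shows "z = 0"
proof -
  have all: "lor z y = 0" for y
  proof -
    have "y \<in> span (insert (F p) (insert (N p) (range L)))" using span_full by simp
    then show ?thesis
    proof (induction rule: span_induct)
      case base
      show ?case unfolding subspace_def
        by (simp add: lor_add_right lor_scale_right)
    next
      case (step x) then show ?case using assms by auto
    qed
  qed
  have "lor z (- fst z, snd z) = 0" by (rule all)
  then have "(fst z)^2 + snd z \<bullet> snd z = 0" by (simp add: lor_def power2_eq_square)
  then have "fst z = 0 \<and> snd z = 0"
    by (metis add_nonneg_eq_0_iff inner_ge_zero inner_eq_zero_iff zero_le_power2 power_eq_0_iff)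
  then show ?thesis by (simp add: prod_eq_iff)
qed

lemma eig_iff: "v \<in> princ_eigenspace F N p k \<longleftrightarrow> M v = - k *\<^sub>R L v"
proof
  assume "M v = - k *\<^sub>R L v"
  then show "v \<in> princ_eigenspace F N p k"
    by (simp add: princ_eigenspace_def sff_def ind_metric_def lor_def algebra_simps)
next
  assume a: "v \<in> princ_eigenspace F N p k"
  have "M v + k *\<^sub>R L v = 0"
  proof (rule nondeg)
    show "lor (M v + k *\<^sub>R L v) (F p) = 0"
      using FM[of v] FL[of v] by (simp add: lor_add_left lor_scale_left lor_sym[of "M v"] lor_sym[of "L v"])
    show "lor (M v + k *\<^sub>R L v) (N p) = 0"
      using NM[of v] NL[of v] by (simp add: lor_add_left lor_scale_left lor_sym[of "M v"] lor_sym[of "L v"])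
    show "lor (M v + k *\<^sub>R L v) (L w) = 0" for w
      using a by (simp add: princ_eigenspace_def sff_def ind_metric_def lor_add_left lor_scale_left)
         (metis add.commute add_eq_0_iff)
  qed
  then show "M v = - k *\<^sub>R L v" by (simp add: eq_neg_iff_add_eq_0)
qed

lemma eig_sub: "subspace (princ_eigenspace F N p k)"
proof -
  have "princ_eigenspace F N p k = {v. (\<lambda>v. M v + k *\<^sub>R L v) v = 0}"
    by (auto simp: eig_iff eq_neg_iff_add_eq_0)
  moreover have "linear (\<lambda>v. M v + k *\<^sub>R L v)"
    by (intro linearI) (simp_all add: linear_add[OF linM] linear_add[OF linL] linear_scale[OF linM] linear_scale[OF linL] algebra_simps)
  ultimately show ?thesis using linear_subspace_kernel by metis
qed

lemma L0: "L v = 0 \<longleftrightarrow> v = 0"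
  using injL linear_0[OF linL] by (metis injD)

lemma eig_int:
  assumes "k1 \<noteq> k2" "v \<in> princ_eigenspace F N p k1" "v \<in> princ_eigenspace F N p k2"
  shows "v = 0"
proof -
  have "- k1 *\<^sub>R L v = - k2 *\<^sub>R L v" using assms by (simp add: eig_iff)
  then have "L v = 0" using assms(1) by (metis neg_equal_iff_equal scaleR_cancel_right)
  then show ?thesis using L0 by simp
qed

lemma decomp:
  assumes "k1 \<noteq> k2" "dim (princ_eigenspace F N p k1) + dim (princ_eigenspace F N p k2) = DIM('m)"
  shows "\<exists>v1 v2. v1 \<in> princ_eigenspace F N p k1 \<and> v2 \<in> princ_eigenspace F N p k2 \<and> v = v1 + v2"
proof -
  let ?S = "princ_eigenspace F N p k1" and ?T = "princ_eigenspace F N p k2"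
  let ?ST = "{x + y |x y. x \<in> ?S \<and> y \<in> ?T}"
  have "?S \<inter> ?T \<subseteq> {0}" using eig_int[OF assms(1)] by auto
  then have "dim (?S \<inter> ?T) = 0" by simp
  then have "dim ?ST = DIM('m)" using dim_sums_Int[OF eig_sub eig_sub, of k1 k2] assms(2) by linarith
  then have "span ?ST = UNIV" using dim_eq_full by blast
  moreover have "span ?ST = ?ST" using subspace_sums[OF eig_sub eig_sub] by simp
  ultimately have "v \<in> ?ST" by simp
  then show ?thesis by blast
qed

end
end




lemma future:
  fixes f x :: "real \<times> 'v::euclidean_space"
  assumes "fst f > 0" "lor f f = -1" "lor x x = -1" "lor f x < 0"
  shows "fst x > 0"
proof (rule ccontr)
  assume "\<not> fst x > 0"
  then have x0: "fst x \<le> 0" by simp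
  have e1: "snd f \<bullet> snd f = (fst f)^2 - 1" using assms(2) by (simp add: lor_def power2_eq_square)
  have e2: "snd x \<bullet> snd x = (fst x)^2 - 1" using assms(3) by (simp add: lor_def power2_eq_square)
  have cs: "(snd f \<bullet> snd x)^2 \<le> (snd f \<bullet> snd f) * (snd x \<bullet> snd x)" by (rule Cauchy_Schwarz_ineq)
  have lt: "snd f \<bullet> snd x < fst f * fst x" using assms(4) by (simp add: lor_def)
  have "fst f * fst x \<le> 0" using x0 assms(1) by (simp add: mult_nonneg_nonpos)
  then have "(-(fst f * fst x))^2 < (-(snd f \<bullet> snd x))^2" using lt
    by (intro power_strict_mono) auto
  then have "(fst f * fst x)^2 < (snd f \<bullet> snd x)^2" by simp
  moreover have "(snd x \<bullet> snd x) \<ge> 0" by simp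
  ultimately have "(fst f * fst x)^2 < ((fst f)^2 - 1) * ((fst x)^2 - 1)" using cs e1 e2 by simp
  then have "(fst f)^2 + (fst x)^2 < 1" by (simp add: algebra_simps power_mult_distrib)
  moreover have "(fst x)^2 \<ge> 1" using e2 inner_ge_zero[of "snd x"] by linarith
  moreover have "(fst f)^2 > 0" using assms(1) by simp
  ultimately show False by linarith
qed

locale cyl = imm U F N for U :: "'m::euclidean_space set" and F N :: "'m \<Rightarrow> real \<times> 'v::euclidean_space" +
  fixes k1 k2 :: real
  assumes kne: "k1 \<noteq> k2"
    and dsum: "\<forall>p\<in>U. dim (princ_eigenspace F N p k1) + dim (princ_eigenspace F N p k2) = DIM('m)"
begin

context fixes x :: real
begin

abbreviation "Fh \<equiv> (\<lambda>y. cosh x *\<^sub>R F y + sinh x *\<^sub>R N y)"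
abbreviation "Nh \<equiv> (\<lambda>y. sinh x *\<^sub>R F y + cosh x *\<^sub>R N y)"

lemma Fh_deriv: "p \<in> U \<Longrightarrow> (Fh has_derivative (\<lambda>v. cosh x *\<^sub>R L p v + sinh x *\<^sub>R M p v)) (at p)"
proof -
  assume p: "p \<in> U"
  have 1: "((\<lambda>y. cosh x *\<^sub>R F y) has_derivative (\<lambda>v. cosh x *\<^sub>R L p v)) (at p)"
    by (rule has_derivative_scaleR_right[OF hasL[OF p]])
  have 2: "((\<lambda>y. sinh x *\<^sub>R N y) has_derivative (\<lambda>v. sinh x *\<^sub>R M p v)) (at p)"
    by (rule has_derivative_scaleR_right[OF hasM[OF p]])
  show ?thesis by (rule has_derivative_add[OF 1 2])
qed
lemma Nh_deriv: "p \<in> U \<Longrightarrow> (Nh has_derivative (\<lambda>v. sinh x *\<^sub>R L p v + cosh x *\<^sub>R M p v)) (at p)"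
proof -
  assume p: "p \<in> U"
  have 1: "((\<lambda>y. sinh x *\<^sub>R F y) has_derivative (\<lambda>v. sinh x *\<^sub>R L p v)) (at p)"
    by (rule has_derivative_scaleR_right[OF hasL[OF p]])
  have 2: "((\<lambda>y. cosh x *\<^sub>R N y) has_derivative (\<lambda>v. cosh x *\<^sub>R M p v)) (at p)"
    by (rule has_derivative_scaleR_right[OF hasM[OF p]])
  show ?thesis by (rule has_derivative_add[OF 1 2])
qed
lemma Fh_frechet: "p \<in> U \<Longrightarrow> frechet_derivative Fh (at p) = (\<lambda>v. cosh x *\<^sub>R L p v + sinh x *\<^sub>R M p v)"
  by (rule frechet_derivative_at[OF Fh_deriv, symmetric])
lemma Nh_frechet: "p \<in> U \<Longrightarrow> frechet_derivative Nh (at p) = (\<lambda>v. sinh x *\<^sub>R L p v + cosh x *\<^sub>R M p v)"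
  by (rule frechet_derivative_at[OF Nh_deriv, symmetric])

lemmas lor_simps = lor_add_left lor_add_right lor_scale_left lor_scale_right

lemma Fh_FF: "p \<in> U \<Longrightarrow> lor (Fh p) (Fh p) = -1"
proof -
  assume p: "p \<in> U"
  have "lor (Fh p) (Fh p) = (cosh x)^2 * lor (F p) (F p) + (sinh x)^2 * lor (N p) (N p) + 2 * cosh x * sinh x * lor (N p) (F p)"
    by (simp add: lor_simps lor_sym[of "F p" "N p"] power2_eq_square algebra_simps)
  also have "\<dots> = - ((cosh x)^2 - (sinh x)^2)" using FF[OF p] NN[OF p] NF[OF p] by simp
  finally show ?thesis using hyperbolic_pythagoras[of x] by simp
qed

lemma Fh_in: "p \<in> U \<Longrightarrow> Fh p \<in> hyperbolic_space"
proof -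
  assume p: "p \<in> U"
  have "lor (F p) (Fh p) = cosh x * lor (F p) (F p) + sinh x * lor (N p) (F p)"
    by (simp add: lor_simps lor_sym[of "F p" "N p"])
  also have "\<dots> = - cosh x" using FF[OF p] NF[OF p] by simp
  finally have "lor (F p) (Fh p) < 0" by simp
  then have "fst (Fh p) > 0" using future[OF fstF[OF p] FF[OF p] Fh_FF[OF p]] by simp
  then show ?thesis using Fh_FF[OF p] by (simp add: hyperbolic_space_def)
qed

lemma Nh_normal: "unit_normal U Fh Nh"
  unfolding unit_normal_def
proof (intro ballI conjI allI)
  fix p assume p: "p \<in> U"
  show "Nh differentiable at p" using Nh_deriv[OF p] by (auto simp: differentiable_def)
  have "lor (Nh p) (Nh p) = (sinh x)^2 * lor (F p) (F p) + (cosh x)^2 * lor (N p) (N p) + 2 * cosh x * sinh x * lor (N p) (F p)"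
    by (simp add: lor_simps lor_sym[of "F p" "N p"] power2_eq_square algebra_simps)
  also have "\<dots> = ((cosh x)^2 - (sinh x)^2)" using FF[OF p] NN[OF p] NF[OF p] by simp
  finally show "lor (Nh p) (Nh p) = 1" using hyperbolic_pythagoras[of x] by simp
  have "lor (Nh p) (Fh p) = sinh x * cosh x * (lor (F p) (F p) + lor (N p) (N p)) + ((sinh x)^2 + (cosh x)^2) * lor (N p) (F p)"
    by (simp add: lor_simps lor_sym[of "F p" "N p"] power2_eq_square algebra_simps)
  then show "lor (Nh p) (Fh p) = 0" using FF[OF p] NN[OF p] NF[OF p] by simp
  fix v
  have "lor (Nh p) (frechet_derivative Fh (at p) v) =
     sinh x * cosh x * lor (F p) (L p v) + sinh x * sinh x * lor (F p) (M p v)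
     + cosh x * cosh x * lor (N p) (L p v) + cosh x * sinh x * lor (N p) (M p v)"
    by (simp add: Fh_frechet[OF p] lor_simps algebra_simps)
  then show "lor (Nh p) (frechet_derivative Fh (at p) v) = 0"
    using FL[OF p] FM[OF p] NL[OF p] NM[OF p] by simp
qed


abbreviation "E1 p \<equiv> princ_eigenspace F N p k1"
abbreviation "E2 p \<equiv> princ_eigenspace F N p k2"

lemma Lh_eig: "p \<in> U \<Longrightarrow> v \<in> princ_eigenspace F N p k \<Longrightarrow>
    frechet_derivative Fh (at p) v = (cosh x - k * sinh x) *\<^sub>R L p v"
  by (simp add: Fh_frechet eig_iff scaleR_diff_left)
lemma Mh_eig: "p \<in> U \<Longrightarrow> v \<in> princ_eigenspace F N p k \<Longrightarrow>
    frechet_derivative Nh (at p) v = (sinh x - k * cosh x) *\<^sub>R L p v"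
  by (simp add: Nh_frechet eig_iff scaleR_diff_left)

lemma sep:
  assumes p: "p \<in> U" and "a \<in> E1 p" "b \<in> E2 p" "a + b = 0"
  shows "a = 0 \<and> b = 0"
proof -
  have "a = - b" using assms(4) by (simp add: eq_neg_iff_add_eq_0)
  then have "a \<in> E2 p" using subspace_neg[OF eig_sub[OF p] assms(3)] by simp
  then have "a = 0" using eig_int[OF p kne assms(2)] by simp
  then show ?thesis using assms(4) by simp
qed

lemma dec: "p \<in> U \<Longrightarrow> \<exists>v1 v2. v1 \<in> E1 p \<and> v2 \<in> E2 p \<and> v = v1 + v2"
  using decomp[OF _ kne] dsum by blast

lemma linLh: "p \<in> U \<Longrightarrow> linear (frechet_derivative Fh (at p))"
  unfolding Fh_frechet by (rule has_derivative_linear[OF Fh_deriv])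
lemma linNh: "p \<in> U \<Longrightarrow> linear (frechet_derivative Nh (at p))"
  unfolding Nh_frechet by (rule has_derivative_linear[OF Nh_deriv])

lemma Fh_imm:
  assumes c1: "cosh x - k1 * sinh x \<noteq> 0" and c2: "cosh x - k2 * sinh x \<noteq> 0"
  shows "immersion_H U Fh"
  unfolding immersion_H_def
proof (intro conjI ballI U_open)
  fix p assume p: "p \<in> U"
  show "Fh differentiable at p" using Fh_deriv[OF p] by (auto simp: differentiable_def)
  show "Fh p \<in> hyperbolic_space" using Fh_in[OF p] .
  show "inj (frechet_derivative Fh (at p))"
    unfolding linear_inj_iff_eq_0[OF linLh[OF p]]
  proof (intro allI impI)
    fix v assume v: "frechet_derivative Fh (at p) v = 0"
    obtain v1 v2 where vv: "v1 \<in> E1 p" "v2 \<in> E2 p" "v = v1 + v2" using dec[OF p] by blast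
    have "frechet_derivative Fh (at p) v = frechet_derivative Fh (at p) v1 + frechet_derivative Fh (at p) v2"
      using vv(3) linear_add[OF linLh[OF p]] by simp
    also have "\<dots> = L p ((cosh x - k1 * sinh x) *\<^sub>R v1 + (cosh x - k2 * sinh x) *\<^sub>R v2)"
      using Lh_eig[OF p vv(1)] Lh_eig[OF p vv(2)] linear_add[OF linL[OF p]] linear_scale[OF linL[OF p]] by simp
    finally have "(cosh x - k1 * sinh x) *\<^sub>R v1 + (cosh x - k2 * sinh x) *\<^sub>R v2 = 0"
      using v L0[OF p] by simp
    then have "(cosh x - k1 * sinh x) *\<^sub>R v1 = 0 \<and> (cosh x - k2 * sinh x) *\<^sub>R v2 = 0"
      using sep[OF p subspace_scale[OF eig_sub[OF p] vv(1)] subspace_scale[OF eig_sub[OF p] vv(2)]] by blast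
    then show "v = 0" using c1 c2 vv(3) by simp
  qed
qed

lemma eig_h:
  assumes c1: "cosh x - k1 * sinh x \<noteq> 0" and c2: "cosh x - k2 * sinh x \<noteq> 0"
    and p: "p \<in> U" and vv: "v1 \<in> E1 p" "v2 \<in> E2 p"
  shows "v1 + v2 \<in> princ_eigenspace Fh Nh p lam \<longleftrightarrow>
     ((sinh x - k1 * cosh x) + lam * (cosh x - k1 * sinh x)) *\<^sub>R v1 = 0 \<and>
     ((sinh x - k2 * cosh x) + lam * (cosh x - k2 * sinh x)) *\<^sub>R v2 = 0"
proof -
  interpret h: imm U Fh Nh using Fh_imm[OF c1 c2] Nh_normal dims by unfold_locales
  have "v1 + v2 \<in> princ_eigenspace Fh Nh p lam \<longleftrightarrow>
     frechet_derivative Nh (at p) (v1 + v2) + lam *\<^sub>R frechet_derivative Fh (at p) (v1 + v2) = 0"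
    using h.eig_iff[OF p] by (simp add: eq_neg_iff_add_eq_0)
  also have "frechet_derivative Nh (at p) (v1 + v2) + lam *\<^sub>R frechet_derivative Fh (at p) (v1 + v2)
     = L p (((sinh x - k1 * cosh x) + lam * (cosh x - k1 * sinh x)) *\<^sub>R v1 +
            ((sinh x - k2 * cosh x) + lam * (cosh x - k2 * sinh x)) *\<^sub>R v2)"
  proof -
    have a: "frechet_derivative Nh (at p) (v1 + v2) = (sinh x - k1 * cosh x) *\<^sub>R L p v1 + (sinh x - k2 * cosh x) *\<^sub>R L p v2"
      by (simp only: linear_add[OF linNh[OF p]] Mh_eig[OF p vv(1)] Mh_eig[OF p vv(2)])
    have b: "frechet_derivative Fh (at p) (v1 + v2) = (cosh x - k1 * sinh x) *\<^sub>R L p v1 + (cosh x - k2 * sinh x) *\<^sub>R L p v2"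
      by (simp only: linear_add[OF linLh[OF p]] Lh_eig[OF p vv(1)] Lh_eig[OF p vv(2)])
    have c: "L p (((sinh x - k1 * cosh x) + lam * (cosh x - k1 * sinh x)) *\<^sub>R v1 +
            ((sinh x - k2 * cosh x) + lam * (cosh x - k2 * sinh x)) *\<^sub>R v2) =
       ((sinh x - k1 * cosh x) + lam * (cosh x - k1 * sinh x)) *\<^sub>R L p v1 +
            ((sinh x - k2 * cosh x) + lam * (cosh x - k2 * sinh x)) *\<^sub>R L p v2"
      by (simp only: linear_add[OF linL[OF p]] linear_scale[OF linL[OF p]])
    show ?thesis unfolding a b c by (simp add: scaleR_add_left scaleR_add_right)
  qed
  also have "\<dots> = 0 \<longleftrightarrow> ((sinh x - k1 * cosh x) + lam * (cosh x - k1 * sinh x)) *\<^sub>R v1 +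
            ((sinh x - k2 * cosh x) + lam * (cosh x - k2 * sinh x)) *\<^sub>R v2 = 0"
    using L0[OF p] by simp
  also have "\<dots> \<longleftrightarrow> ((sinh x - k1 * cosh x) + lam * (cosh x - k1 * sinh x)) *\<^sub>R v1 = 0 \<and>
     ((sinh x - k2 * cosh x) + lam * (cosh x - k2 * sinh x)) *\<^sub>R v2 = 0"
  proof
    assume "((sinh x - k1 * cosh x) + lam * (cosh x - k1 * sinh x)) *\<^sub>R v1 +
            ((sinh x - k2 * cosh x) + lam * (cosh x - k2 * sinh x)) *\<^sub>R v2 = 0"
    then show "((sinh x - k1 * cosh x) + lam * (cosh x - k1 * sinh x)) *\<^sub>R v1 = 0 \<and>
     ((sinh x - k2 * cosh x) + lam * (cosh x - k2 * sinh x)) *\<^sub>R v2 = 0"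
      by (rule sep[OF p subspace_scale[OF eig_sub[OF p] vv(1)] subspace_scale[OF eig_sub[OF p] vv(2)]])
  qed auto
  finally show ?thesis .
qed


lemma K_ne:
  assumes c1: "cosh x - k1 * sinh x \<noteq> 0" and c2: "cosh x - k2 * sinh x \<noteq> 0"
  shows "(sinh x - k1 * cosh x) + lam * (cosh x - k1 * sinh x) \<noteq> 0 \<or>
         (sinh x - k2 * cosh x) + lam * (cosh x - k2 * sinh x) \<noteq> 0"
proof (rule ccontr)
  assume "\<not> ?thesis"
  then have a: "sinh x - k1 * cosh x = - lam * (cosh x - k1 * sinh x)"
    and b: "sinh x - k2 * cosh x = - lam * (cosh x - k2 * sinh x)" by (simp_all add: algebra_simps)
  have "(sinh x - k1 * cosh x) * (cosh x - k2 * sinh x) - (sinh x - k2 * cosh x) * (cosh x - k1 * sinh x)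
      = (k2 - k1) * ((cosh x)^2 - (sinh x)^2)" by (simp add: algebra_simps power2_eq_square)
  also have "\<dots> = k2 - k1" by (simp add: hyperbolic_pythagoras)
  finally have "k2 - k1 = 0" unfolding a b by (simp add: algebra_simps)
  then show False using kne by simp
qed

lemma mean_h:
  assumes c1: "cosh x - k1 * sinh x \<noteq> 0" and c2: "cosh x - k2 * sinh x \<noteq> 0"
    and p: "p \<in> U" and d1: "dim (E1 p) > 0" and d2: "dim (E2 p) > 0"
  shows "mean_curvature Fh Nh p =
     real (dim (E1 p)) * ((k1 * cosh x - sinh x) / (cosh x - k1 * sinh x)) +
     real (dim (E2 p)) * ((k2 * cosh x - sinh x) / (cosh x - k2 * sinh x))"
proof -
  define K1 where "K1 = (k1 * cosh x - sinh x) / (cosh x - k1 * sinh x)"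
  define K2 where "K2 = (k2 * cosh x - sinh x) / (cosh x - k2 * sinh x)"
  have z1: "(sinh x - k1 * cosh x) + K1 * (cosh x - k1 * sinh x) = 0"
    using c1 by (simp add: K1_def field_simps)
  have z2: "(sinh x - k2 * cosh x) + K2 * (cosh x - k2 * sinh x) = 0"
    using c2 by (simp add: K2_def field_simps)
  have nz2: "(sinh x - k2 * cosh x) + K1 * (cosh x - k2 * sinh x) \<noteq> 0"
    using K_ne[OF c1 c2, of K1] z1 by simp
  have nz1: "(sinh x - k1 * cosh x) + K2 * (cosh x - k1 * sinh x) \<noteq> 0"
    using K_ne[OF c1 c2, of K2] z2 by simp
  have K12: "K1 \<noteq> K2" using nz1 z1 by auto
  have zero_in: "0 \<in> princ_eigenspace Fh Nh p lam" for lam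
    using eig_h[OF c1 c2 p subspace_0[OF eig_sub[OF p]] subspace_0[OF eig_sub[OF p]], of lam] by simp
  have e1: "princ_eigenspace Fh Nh p K1 = E1 p"
  proof
    show "princ_eigenspace Fh Nh p K1 \<subseteq> E1 p"
    proof
      fix v assume v: "v \<in> princ_eigenspace Fh Nh p K1"
      obtain v1 v2 where vv: "v1 \<in> E1 p" "v2 \<in> E2 p" "v = v1 + v2" using dec[OF p] by blast
      have "v2 = 0" using eig_h[OF c1 c2 p vv(1,2), of K1] v vv(3) nz2 by simp
      then show "v \<in> E1 p" using vv by simp
    qed
    show "E1 p \<subseteq> princ_eigenspace Fh Nh p K1"
    proof
      fix v assume v: "v \<in> E1 p"
      show "v \<in> princ_eigenspace Fh Nh p K1"
        using eig_h[OF c1 c2 p v subspace_0[OF eig_sub[OF p]], of K1] z1 by simp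
    qed
  qed
  have e2: "princ_eigenspace Fh Nh p K2 = E2 p"
  proof
    show "princ_eigenspace Fh Nh p K2 \<subseteq> E2 p"
    proof
      fix v assume v: "v \<in> princ_eigenspace Fh Nh p K2"
      obtain v1 v2 where vv: "v1 \<in> E1 p" "v2 \<in> E2 p" "v = v1 + v2" using dec[OF p] by blast
      have "v1 = 0" using eig_h[OF c1 c2 p vv(1,2), of K2] v vv(3) nz1 by simp
      then show "v \<in> E2 p" using vv by simp
    qed
    show "E2 p \<subseteq> princ_eigenspace Fh Nh p K2"
    proof
      fix v assume v: "v \<in> E2 p"
      show "v \<in> princ_eigenspace Fh Nh p K2"
        using eig_h[OF c1 c2 p subspace_0[OF eig_sub[OF p]] v, of K2] z2 by simp
    qed
  qed
  have eo: "princ_eigenspace Fh Nh p lam = {0}" if "lam \<noteq> K1" "lam \<noteq> K2" for lam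
  proof -
    have n1: "(sinh x - k1 * cosh x) + lam * (cosh x - k1 * sinh x) \<noteq> 0"
    proof
      assume "(sinh x - k1 * cosh x) + lam * (cosh x - k1 * sinh x) = 0"
      then have "lam = K1" using c1 unfolding K1_def by (simp add: field_simps)
      then show False using that by simp
    qed
    have n2: "(sinh x - k2 * cosh x) + lam * (cosh x - k2 * sinh x) \<noteq> 0"
    proof
      assume "(sinh x - k2 * cosh x) + lam * (cosh x - k2 * sinh x) = 0"
      then have "lam = K2" using c2 unfolding K2_def by (simp add: field_simps)
      then show False using that by simp
    qed
    show ?thesis
    proof
      show "princ_eigenspace Fh Nh p lam \<subseteq> {0}"
      proof
        fix v assume v: "v \<in> princ_eigenspace Fh Nh p lam"
        obtain v1 v2 where vv: "v1 \<in> E1 p" "v2 \<in> E2 p" "v = v1 + v2" using dec[OF p] by blast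
        have "v1 = 0 \<and> v2 = 0" using eig_h[OF c1 c2 p vv(1,2), of lam] v vv(3) n1 n2 by simp
        then show "v \<in> {0}" using vv by simp
      qed
      show "{0} \<subseteq> princ_eigenspace Fh Nh p lam" using zero_in by simp
    qed
  qed
  have ne1: "E1 p \<noteq> {0}" using d1 by (metis dim_eq_0 order_refl less_irrefl)
  have ne2: "E2 p \<noteq> {0}" using d2 by (metis dim_eq_0 order_refl less_irrefl)
  have S: "{lam. princ_eigenspace Fh Nh p lam \<noteq> {0}} = {K1, K2}"
    using e1 e2 eo ne1 ne2 by auto
  show ?thesis unfolding mean_curvature_def S
    using K12 e1 e2 by (simp add: K1_def[symmetric] K2_def[symmetric])
qed


lemma collapse_range:
  assumes c1: "cosh x - k1 * sinh x = 0" and c2: "cosh x - k2 * sinh x \<noteq> 0" and p: "p \<in> U"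
  shows "range (frechet_derivative Fh (at p)) = L p ` E2 p"
proof
  show "range (frechet_derivative Fh (at p)) \<subseteq> L p ` E2 p"
  proof
    fix z assume "z \<in> range (frechet_derivative Fh (at p))"
    then obtain v where z: "z = frechet_derivative Fh (at p) v" by auto
    obtain v1 v2 where vv: "v1 \<in> E1 p" "v2 \<in> E2 p" "v = v1 + v2" using dec[OF p] by blast
    have "z = frechet_derivative Fh (at p) v1 + frechet_derivative Fh (at p) v2"
      using z vv(3) linear_add[OF linLh[OF p]] by simp
    also have "\<dots> = L p ((cosh x - k2 * sinh x) *\<^sub>R v2)"
      using Lh_eig[OF p vv(1)] Lh_eig[OF p vv(2)] c1 linear_scale[OF linL[OF p]] by simp
    finally show "z \<in> L p ` E2 p" using subspace_scale[OF eig_sub[OF p] vv(2)] by blast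
  qed
  show "L p ` E2 p \<subseteq> range (frechet_derivative Fh (at p))"
  proof
    fix z assume "z \<in> L p ` E2 p"
    then obtain v where v: "v \<in> E2 p" "z = L p v" by auto
    have v': "(1 / (cosh x - k2 * sinh x)) *\<^sub>R v \<in> E2 p" using subspace_scale[OF eig_sub[OF p] v(1)] .
    have "frechet_derivative Fh (at p) ((1 / (cosh x - k2 * sinh x)) *\<^sub>R v) = L p v"
      using Lh_eig[OF p v'] linear_scale[OF linL[OF p]] c2 by simp
    then have "z = frechet_derivative Fh (at p) ((1 / (cosh x - k2 * sinh x)) *\<^sub>R v)" using v(2) by simp
    then show "z \<in> range (frechet_derivative Fh (at p))" by (rule range_eqI)
  qed
qed

lemma collapse_dim:
  assumes c1: "cosh x - k1 * sinh x = 0" and c2: "cosh x - k2 * sinh x \<noteq> 0" and p: "p \<in> U"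
  shows "dim (range (frechet_derivative Fh (at p))) = dim (E2 p)"
  unfolding collapse_range[OF assms]
proof (rule dim_image_eq[OF linL[OF p]])
  show "inj_on (L p) (span (E2 p))" using injL[OF p] inj_on_subset by blast
qed

end
end



lemma ode_alg:
  fixes k w m1 m2 :: real
  assumes k: "k > 1" and w: "0 < w" "w < k - 1/k" and m: "m1 > 0" "m2 > 0"
  defines "D \<equiv> k - 1/k"
  defines "X \<equiv> w / (k + 1/k - 2)"
  defines "l \<equiv> (w + D^2 / w) / 2" and "s \<equiv> (D^2 / w - w) / 2"
  defines "b \<equiv> - (m1 - m2) / (m1 + m2) * D"
  shows "(m1 + m2) * (l - b) / s =
     m1 * ((k * (X + 1) - (X - 1)) / ((X + 1) - k * (X - 1))) +
     m2 * (((1/k) * (X + 1) - (X - 1)) / ((X + 1) - (1/k) * (X - 1)))"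
proof -
  have k0: "k \<noteq> 0" "k - 1 \<noteq> 0" using k by auto
  have a2: "k + 1/k - 2 = (k - 1)^2 / k" using k0 by (simp add: field_simps power2_eq_square)
  have X: "X = w * k / ((k - 1) * (k - 1))" unfolding X_def a2 using k0 by (simp add: power2_eq_square)
  have D: "D = (k^2 - 1) / k" unfolding D_def using k0 by (simp add: field_simps power2_eq_square)
  have kp: "(k - 1) * (k - 1) > 0" using k by simp
  have kk: "1 + k * k - k * 2 \<noteq> 0" "(k - 1) * (k - 1) \<noteq> 0" using kp by (auto simp: algebra_simps)
  have wD: "w * k < k^2 - 1" using w(2) k by (simp add: field_simps power2_eq_square)
  have XX: "X * ((k - 1) * (k - 1)) = w * k" unfolding X using kk by simp
  have k1: "k - 1 \<noteq> 0" "k * (k - 1) \<noteq> 0" using k by auto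
  have den1: "(X + 1) - k * (X - 1) = (k^2 - 1 - w * k) / (k - 1)"
  proof -
    have "((X + 1) - k * (X - 1)) * (k - 1) = k^2 - 1 - X * ((k - 1) * (k - 1))"
      by (simp add: algebra_simps power2_eq_square)
    then show ?thesis unfolding XX using k1 by (simp add: eq_divide_eq)
  qed
  have num1: "k * (X + 1) - (X - 1) = (k^2 - 1 + w * k) / (k - 1)"
  proof -
    have "(k * (X + 1) - (X - 1)) * (k - 1) = k^2 - 1 + X * ((k - 1) * (k - 1))"
      by (simp add: algebra_simps power2_eq_square)
    then show ?thesis unfolding XX using k1 by (simp add: eq_divide_eq)
  qed
  have den2: "(X + 1) - (1/k) * (X - 1) = (k^2 - 1 + w * k) / (k * (k - 1))"
  proof -
    have "((X + 1) - (1/k) * (X - 1)) * (k * (k - 1)) = k^2 - 1 + X * ((k - 1) * (k - 1))"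
      using k0 by (simp add: field_simps power2_eq_square)
    then show ?thesis unfolding XX using k1 by (simp add: eq_divide_eq)
  qed
  have num2: "(1/k) * (X + 1) - (X - 1) = (k^2 - 1 - w * k) / (k * (k - 1))"
  proof -
    have "((1/k) * (X + 1) - (X - 1)) * (k * (k - 1)) = k^2 - 1 - X * ((k - 1) * (k - 1))"
      using k0 by (simp add: field_simps power2_eq_square)
    then show ?thesis unfolding XX using k1 by (simp add: eq_divide_eq)
  qed
  define A where "A = w * k"
  define B where "B = k^2 - 1"
  have A0: "A > 0" "A < B" using w k wD by (auto simp: A_def B_def)
  have lA: "l = (A^2 + B^2) / (2 * k * A)" unfolding l_def D A_def B_def using k0 w
    by (simp add: field_simps power2_eq_square)
  have sA: "s = (B^2 - A^2) / (2 * k * A)" unfolding s_def D A_def B_def using k0 w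
    by (simp add: field_simps power2_eq_square)
  have bA: "b = - (m1 - m2) / (m1 + m2) * (B / k)" unfolding b_def D B_def ..
  have f1: "(k * (X + 1) - (X - 1)) / ((X + 1) - k * (X - 1)) = (B + A) / (B - A)"
    unfolding num1 den1 A_def[symmetric] B_def[symmetric] using k1 by (simp add: add.commute)
  have f2: "((1/k) * (X + 1) - (X - 1)) / ((X + 1) - (1/k) * (X - 1)) = (B - A) / (B + A)"
    unfolding num2 den2 A_def[symmetric] B_def[symmetric] using k1 by (simp add: add.commute)
  have BA: "B - A > 0" "B + A > 0" using A0 by auto
  have L: "(m1 + m2) * (l - b) / s = ((m1 + m2) * (A^2 + B^2) + 2 * (m1 - m2) * A * B) / (B^2 - A^2)"
  proof -
    have mm: "m1 + m2 \<noteq> 0" "A \<noteq> 0" using m A0 by auto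
    have mm2: "k * m1 + k * m2 \<noteq> 0" using mm(1) k0(1) by (metis distrib_left mult_eq_0_iff)
    have l2: "l * (2 * k * A) = A^2 + B^2" unfolding lA using k0 mm by simp
    have b2: "b * ((m1 + m2) * k) = - (m1 - m2) * B" unfolding bA using k0 mm by simp
    have "(l - b) * (2 * k * A * (m1 + m2)) = (l * (2 * k * A)) * (m1 + m2) - (b * ((m1 + m2) * k)) * (2 * A)"
      by (simp add: algebra_simps)
    also have "\<dots> = (m1 + m2) * (A^2 + B^2) + 2 * (m1 - m2) * A * B" unfolding l2 b2 by (simp add: algebra_simps)
    finally have "(l - b) * (2 * k * A * (m1 + m2)) = (m1 + m2) * (A^2 + B^2) + 2 * (m1 - m2) * A * B" .
    then have "(m1 + m2) * (l - b) * (2 * k * A) = (m1 + m2) * (A^2 + B^2) + 2 * (m1 - m2) * A * B"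
      by (simp add: algebra_simps)
    then have e: "(m1 + m2) * (l - b) = ((m1 + m2) * (A^2 + B^2) + 2 * (m1 - m2) * A * B) / (2 * k * A)"
      using k0 mm by (simp add: eq_divide_eq)
    show ?thesis unfolding e sA using k0 mm by simp
  qed
  have "m1 * ((B + A) / (B - A)) + m2 * ((B - A) / (B + A)) =
      ((m1 + m2) * (A^2 + B^2) + 2 * (m1 - m2) * A * B) / ((B - A) * (B + A))"
    using BA by (simp add: field_simps power2_eq_square)
  moreover have "(B - A) * (B + A) = B^2 - A^2" by (simp add: power2_eq_square algebra_simps)
  ultimately show ?thesis unfolding f1 f2 L by simp
qed


lemma hypX:
  fixes y :: real
  shows "2 * exp y * cosh y = exp (2 * y) + 1" "2 * exp y * sinh y = exp (2 * y) - 1"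
proof -
  have e: "exp (2 * y) = exp y * exp y" by (simp add: exp_double power2_eq_square)
  have i: "exp y * exp (- y) = 1" by (simp add: exp_minus)
  have c: "2 * exp y * ((exp y + exp (- y)) / 2) = exp y * exp y + exp y * exp (- y)"
    by (simp add: distrib_left)
  have d: "2 * exp y * ((exp y - exp (- y)) / 2) = exp y * exp y - exp y * exp (- y)"
    by (simp add: right_diff_distrib)
  show "2 * exp y * cosh y = exp (2 * y) + 1" unfolding e cosh_field_def c i ..
  show "2 * exp y * sinh y = exp (2 * y) - 1" unfolding e sinh_field_def d i ..
qed

lemma K_X:
  fixes y k :: real
  shows "(k * cosh y - sinh y) / (cosh y - k * sinh y) =
     (k * (exp (2*y) + 1) - (exp (2*y) - 1)) / ((exp (2*y) + 1) - k * (exp (2*y) - 1))"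
    and "cosh y - k * sinh y = ((exp (2*y) + 1) - k * (exp (2*y) - 1)) / (2 * exp y)"
proof -
  have p: "2 * exp y \<noteq> 0" by simp
  have "(k * cosh y - sinh y) = (k * (2 * exp y * cosh y) - (2 * exp y * sinh y)) / (2 * exp y)"
    using p by (simp add: field_simps)
  then have "(k * cosh y - sinh y) = (k * (exp (2*y) + 1) - (exp (2*y) - 1)) / (2 * exp y)"
    unfolding hypX .
  moreover have "(cosh y - k * sinh y) = ((2 * exp y * cosh y) - k * (2 * exp y * sinh y)) / (2 * exp y)"
    using p by (simp add: field_simps)
  then have c: "(cosh y - k * sinh y) = ((exp (2*y) + 1) - k * (exp (2*y) - 1)) / (2 * exp y)"
    unfolding hypX .
  ultimately show "(k * cosh y - sinh y) / (cosh y - k * sinh y) =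
     (k * (exp (2*y) + 1) - (exp (2*y) - 1)) / ((exp (2*y) + 1) - k * (exp (2*y) - 1))"
    using p by simp
  show "cosh y - k * sinh y = ((exp (2*y) + 1) - k * (exp (2*y) - 1)) / (2 * exp y)" by (rule c)
qed

lemma c2_pos:
  fixes y k :: real
  assumes "0 < k" "k < 1"
  shows "cosh y - k * sinh y > 0"
proof -
  have "cosh y - sinh y > 0" "cosh y + sinh y > 0" by (simp_all add: cosh_minus_sinh cosh_plus_sinh)
  then have "\<bar>sinh y\<bar> < cosh y" by linarith
  moreover have "k * sinh y \<le> k * \<bar>sinh y\<bar>" using assms by (intro mult_left_mono) auto
  moreover have "k * \<bar>sinh y\<bar> \<le> \<bar>sinh y\<bar>" using assms by (intro mult_left_le_one_le) auto
  ultimately show ?thesis by linarith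
qed


lemma cancel_aux: "(x::real) \<noteq> 0 \<Longrightarrow> (c * x / y) * (z / x) = c * z / y"
  by (cases "y = 0") (simp_all add: field_simps)

lemma den_aux:
  fixes k w X :: real
  assumes k: "k > 1" and X: "X = w / (k + 1/k - 2)"
  shows "(X + 1) - k * (X - 1) = (k^2 - 1 - w * k) / (k - 1)"
proof -
  have k0: "k \<noteq> 0" "k - 1 \<noteq> 0" using k by auto
  have a2: "k + 1/k - 2 = (k - 1)^2 / k" using k0 by (simp add: field_simps power2_eq_square)
  have kp: "(k - 1) * (k - 1) > 0" using k by simp
  have kk: "1 + k * k - k * 2 \<noteq> 0" "(k - 1) * (k - 1) \<noteq> 0" using kp by (auto simp: algebra_simps)
  have X': "X = w * k / ((k - 1) * (k - 1))" unfolding X a2 using k0 by (simp add: power2_eq_square)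
  have XX: "X * ((k - 1) * (k - 1)) = w * k" unfolding X' using kk by simp
  have "((X + 1) - k * (X - 1)) * (k - 1) = k^2 - 1 - X * ((k - 1) * (k - 1))"
    by (simp add: algebra_simps power2_eq_square)
  then show ?thesis unfolding XX using k0 by (simp add: eq_divide_eq)
qed

locale ana =
  fixes m1 m2 n :: nat and k1 k2 a b tstar :: real and l q :: "real \<Rightarrow> real"
  assumes nn: "n = m1 + m2" and m1: "m1 \<ge> 1" and m2: "m2 \<ge> 1"
    and k1: "k1 > 1" and kk: "k1 * k2 = 1"
    and a_def: "a = k1 + k2"
    and b_def: "b = - (real m1 - real m2) / real n * (k1 - k2)"
    and l_def: "l = (\<lambda>t. (a - b) * exp (- 2 * real n * t) + b)"
    and q_def: "q = (\<lambda>t. (l t)\<^sup>2 - a\<^sup>2 + 4)"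
    and ts_def: "tstar = 1 / (2 * real n) * ln ((real m1 * k1\<^sup>2 + real m2) / (real m1 * (k1\<^sup>2 - 1)))"
begin

definition "D = k1 - k2"

lemma k2: "k2 = 1 / k1" using kk k1 by (simp add: field_simps)
lemma k2b: "0 < k2" "k2 < 1" using k1 unfolding k2 by auto
lemma Dk: "D = (k1^2 - 1) / k1"
proof -
  have "D = k1 - 1 / k1" by (simp only: D_def) (simp add: k2)
  then show ?thesis using k1 by (simp add: field_simps power2_eq_square)
qed
lemma Dpos: "D > 0" unfolding D_def using k2b k1 by simp
lemma a4: "a^2 - 4 = D^2" unfolding a_def D_def using kk by (simp add: power2_eq_square algebra_simps)
lemma am2: "a - 2 > 0"
proof -
  have "(k1 - 1)^2 > 0" using k1 by simp
  then have "k1^2 + 1 > 2 * k1" by (simp add: power2_eq_square algebra_simps)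
  then have "k1 + 1/k1 > 2" using k1 by (simp add: field_simps power2_eq_square)
  then show ?thesis unfolding a_def k2 by simp
qed
lemma nr: "real n = real m1 + real m2" "real n > 0" using nn m1 by auto

lemma ab1: "a - b = 2 * (real m1 * k1 + real m2 * k2) / real n"
  unfolding a_def b_def using nr by (simp add: field_simps)
lemma amb: "a - b > 0"
  unfolding ab1 using m1 m2 k1 k2b nr by (simp add: add_pos_pos)

lemma Dmb: "D - b = 2 * real m1 * D / real n"
  unfolding b_def D_def using nr by (simp add: field_simps)

lemma ratio: "(real m1 * k1\<^sup>2 + real m2) / (real m1 * (k1\<^sup>2 - 1)) > 1"
proof -
  have "k1^2 > 1" using k1 by (simp add: one_less_power)
  then have "real m1 * (k1\<^sup>2 - 1) > 0" using m1 by simp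
  moreover have "real m1 * k1\<^sup>2 + real m2 > real m1 * (k1\<^sup>2 - 1)" using m2 by (simp add: algebra_simps)
  ultimately show ?thesis by simp
qed

lemma ts_pos: "tstar > 0"
  unfolding ts_def using ratio nr by simp

lemma exp_ts: "exp (- 2 * real n * tstar) = (real m1 * (k1\<^sup>2 - 1)) / (real m1 * k1\<^sup>2 + real m2)"
proof -
  have "- 2 * real n * tstar = - ((2 * real n) * (1 / (2 * real n))) * ln ((real m1 * k1\<^sup>2 + real m2) / (real m1 * (k1\<^sup>2 - 1)))"
    unfolding ts_def by (simp only: mult.assoc mult_minus_left)
  also have "\<dots> = - ln ((real m1 * k1\<^sup>2 + real m2) / (real m1 * (k1\<^sup>2 - 1)))"
    using nr by simp
  finally have "- 2 * real n * tstar = - ln ((real m1 * k1\<^sup>2 + real m2) / (real m1 * (k1\<^sup>2 - 1)))" .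
  then show ?thesis using ratio by (simp add: exp_minus)
qed

lemma l_ts: "l tstar = D"
proof -
  have pos: "real m1 * k1\<^sup>2 + real m2 > 0" using m1 m2 k1 by (intro add_pos_pos mult_pos_pos) auto
  have "a - b = 2 * (real m1 * k1 + real m2 * k2) / real n" by (rule ab1)
  also have "\<dots> = 2 * (real m1 * k1\<^sup>2 + real m2) / (real n * k1)"
    unfolding k2 using k1 nr by (simp add: field_simps power2_eq_square)
  finally have ab: "a - b = 2 * (real m1 * k1\<^sup>2 + real m2) / (real n * k1)" .
  have "(a - b) * exp (- 2 * real n * tstar) = 2 * real m1 * (k1\<^sup>2 - 1) / (real n * k1)"
    unfolding ab exp_ts using cancel_aux[of "real m1 * k1\<^sup>2 + real m2" 2 "real n * k1" "real m1 * (k1\<^sup>2 - 1)"] pos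
    by (simp add: mult.assoc)
  also have "\<dots> = 2 * real m1 * D / real n"
  proof -
    show ?thesis unfolding Dk by simp
  qed
  also have "\<dots> = D - b" using Dmb by simp
  finally show ?thesis unfolding l_def by simp
qed

lemma l_ge: "t \<le> tstar \<Longrightarrow> l t \<ge> D"
proof -
  assume t: "t \<le> tstar"
  have "exp (- 2 * real n * t) \<ge> exp (- 2 * real n * tstar)" using t nr by simp
  then have "(a - b) * exp (- 2 * real n * t) \<ge> (a - b) * exp (- 2 * real n * tstar)"
    using amb by (simp add: mult_left_mono)
  then show ?thesis using l_ts unfolding l_def by simp
qed

lemma l_gt: "t < tstar \<Longrightarrow> l t > D"
proof -
  assume t: "t < tstar"
  have "exp (- 2 * real n * t) > exp (- 2 * real n * tstar)" using t nr by simp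
  then have "(a - b) * exp (- 2 * real n * t) > (a - b) * exp (- 2 * real n * tstar)"
    using amb by simp
  then show ?thesis using l_ts unfolding l_def by simp
qed

lemma q_eq: "q t = (l t)^2 - D^2" unfolding q_def using a4 by simp

lemma q_ge: "t \<le> tstar \<Longrightarrow> q t \<ge> 0"
  unfolding q_eq using l_ge Dpos by (simp add: power_mono)
lemma q_gt: "t < tstar \<Longrightarrow> q t > 0"
  unfolding q_eq using l_gt Dpos by (simp add: power_strict_mono)
lemma q_ts: "q tstar = 0" unfolding q_eq l_ts by simp

definition "E t = (l t - sqrt (q t)) / (a - 2)"
definition "xi0 t = ln (E t) / 2"

lemma ap2: "a + 2 > 0" using am2 by simp
lemma a4f: "a^2 - 4 = (a - 2) * (a + 2)" by (simp add: power2_eq_square algebra_simps)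

lemma l_pos: "t \<le> tstar \<Longrightarrow> l t > 0" using l_ge Dpos by force

lemma sq: "t \<le> tstar \<Longrightarrow> (sqrt (q t))^2 = q t" using q_ge by simp

lemma s_lt: "t \<le> tstar \<Longrightarrow> sqrt (q t) < l t"
proof -
  assume t: "t \<le> tstar"
  have "q t < (l t)^2" unfolding q_eq using Dpos by simp
  then have "sqrt (q t) < sqrt ((l t)^2)" by (rule real_sqrt_less_mono)
  then show ?thesis using l_pos[OF t] by simp
qed

lemma prodD: "t \<le> tstar \<Longrightarrow> (l t - sqrt (q t)) * (l t + sqrt (q t)) = D^2"
proof -
  assume t: "t \<le> tstar"
  have "(l t - sqrt (q t)) * (l t + sqrt (q t)) = (l t)^2 - (sqrt (q t))^2"
    by (simp add: power2_eq_square algebra_simps)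
  then show ?thesis using sq[OF t] q_eq[of t] by simp
qed

lemma E_pos: "t \<le> tstar \<Longrightarrow> E t > 0"
  unfolding E_def using s_lt am2 by simp

lemma E_inv: "t \<le> tstar \<Longrightarrow> inverse (E t) = (l t + sqrt (q t)) / (a + 2)"
proof -
  assume t: "t \<le> tstar"
  have "E t * ((l t + sqrt (q t)) / (a + 2)) = (l t - sqrt (q t)) * (l t + sqrt (q t)) / ((a - 2) * (a + 2))"
    unfolding E_def by simp
  also have "\<dots> = 1" unfolding prodD[OF t] a4f[symmetric] a4 using Dpos by simp
  finally show ?thesis using E_pos[OF t] by (simp add: field_simps)
qed

lemma exp_xi0: "t \<le> tstar \<Longrightarrow> exp (2 * xi0 t) = E t"
  unfolding xi0_def using E_pos by simp

lemma xi0_ok: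
  assumes t: "t \<le> tstar"
  shows "cosh (2 * xi0 t) = (a * l t - 2 * sqrt (q t)) / (a\<^sup>2 - 4)"
    and "sinh (2 * xi0 t) = (2 * l t - a * sqrt (q t)) / (a\<^sup>2 - 4)"
proof -
  have em: "exp (- (2 * xi0 t)) = (l t + sqrt (q t)) / (a + 2)"
    unfolding exp_minus exp_xi0[OF t] E_inv[OF t] ..
  have ep: "exp (2 * xi0 t) = (l t - sqrt (q t)) / (a - 2)" unfolding exp_xi0[OF t] E_def ..
  have n0: "a - 2 \<noteq> 0" "a + 2 \<noteq> 0" using am2 ap2 by auto
  have n1: "a * a - 4 \<noteq> 0" "a * (a * 2) - 8 \<noteq> 0" using a4 Dpos by (auto simp: power2_eq_square)
  show "cosh (2 * xi0 t) = (a * l t - 2 * sqrt (q t)) / (a\<^sup>2 - 4)"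
    unfolding cosh_field_def ep em a4f using n0 n1 by (simp add: field_simps)
  show "sinh (2 * xi0 t) = (2 * l t - a * sqrt (q t)) / (a\<^sup>2 - 4)"
    unfolding sinh_field_def ep em a4f using n0 n1 by (simp add: field_simps)
qed

lemma uniq:
  assumes t: "t \<le> tstar"
    and c: "cosh (2 * y) = (a * l t - 2 * sqrt (q t)) / (a\<^sup>2 - 4)"
    and s: "sinh (2 * y) = (2 * l t - a * sqrt (q t)) / (a\<^sup>2 - 4)"
  shows "y = xi0 t"
proof -
  have n0: "a - 2 \<noteq> 0" "a + 2 \<noteq> 0" using am2 ap2 by auto
  have "exp (2 * y) = cosh (2 * y) + sinh (2 * y)" by (simp add: cosh_plus_sinh)
  also have "\<dots> = ((a + 2) * (l t - sqrt (q t))) / ((a - 2) * (a + 2))" unfolding c s a4f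
    by (simp add: add_divide_distrib[symmetric] algebra_simps)
  also have "\<dots> = E t" unfolding E_def using n0 by simp
  finally have "exp (2 * y) = E t" .
  then have "2 * y = ln (E t)" using ln_exp by metis
  then show ?thesis unfolding xi0_def by simp
qed

lemma xi0_0: "xi0 0 = 0"
proof -
  have "l 0 = a" unfolding l_def by simp
  moreover have "q 0 = 4" unfolding q_def using \<open>l 0 = a\<close> by simp
  moreover have "sqrt 4 = (2::real)" by (simp add: real_sqrt_eq_iff power2_eq_square[symmetric])
  ultimately have "E 0 = 1" unfolding E_def using am2 by simp
  then show ?thesis unfolding xi0_def by simp
qed

lemma xi0_deriv:
  assumes t: "t < tstar"
  shows "(xi0 has_real_derivative (real n * (l t - b) / sqrt (q t))) (at t)"
proof -
  have tl: "t \<le> tstar" using t by simp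
  define l' where "l' = - 2 * real n * (l t - b)"
  have dl: "(l has_real_derivative l') (at t)"
    unfolding l'_def l_def by (auto intro!: derivative_eq_intros simp: algebra_simps)
  have dq: "(q has_real_derivative 2 * l t * l') (at t)"
  proof -
    have "((\<lambda>t. (l t)\<^sup>2 - a\<^sup>2 + 4) has_real_derivative 2 * l t * l') (at t)"
      using dl by (auto intro!: derivative_eq_intros)
    then show ?thesis unfolding q_def .
  qed
  have ds: "((\<lambda>t. sqrt (q t)) has_real_derivative inverse (sqrt (q t)) / 2 * (2 * l t * l')) (at t)"
    by (rule DERIV_chain2[OF DERIV_real_sqrt[OF q_gt[OF t]] dq])
  have dE: "(E has_real_derivative (l' - inverse (sqrt (q t)) / 2 * (2 * l t * l')) / (a - 2)) (at t)"
  proof -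
    have "((\<lambda>t. (l t - sqrt (q t)) / (a - 2)) has_real_derivative (l' - inverse (sqrt (q t)) / 2 * (2 * l t * l')) / (a - 2)) (at t)"
      by (rule DERIV_cdivide[OF DERIV_diff[OF dl ds]])
    then show ?thesis unfolding E_def[abs_def] .
  qed
  have dx: "(xi0 has_real_derivative inverse (E t) * ((l' - inverse (sqrt (q t)) / 2 * (2 * l t * l')) / (a - 2)) / 2) (at t)"
  proof -
    have "((\<lambda>t. ln (E t) / 2) has_real_derivative inverse (E t) * ((l' - inverse (sqrt (q t)) / 2 * (2 * l t * l')) / (a - 2)) / 2) (at t)"
      by (rule DERIV_cdivide[OF DERIV_chain2[OF DERIV_ln[OF E_pos[OF tl]] dE]])
    then show ?thesis unfolding xi0_def[abs_def] .
  qed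
  have sp: "sqrt (q t) > 0" using q_gt[OF t] by simp
  have ls: "l t - sqrt (q t) > 0" using s_lt[OF tl] by simp
  have i1: "inverse (sqrt (q t)) / 2 * (2 * l t * l') = l t * l' / sqrt (q t)" by (simp add: field_simps)
  have inv: "inverse (E t) = (a - 2) / (l t - sqrt (q t))" unfolding E_def by simp
  have i2: "inverse (E t) * (Z / (a - 2)) = Z / (l t - sqrt (q t))" for Z
    unfolding inv using am2 by simp
  have "inverse (E t) * ((l' - inverse (sqrt (q t)) / 2 * (2 * l t * l')) / (a - 2)) / 2
      = (l' - l t * l' / sqrt (q t)) / (l t - sqrt (q t)) / 2"
    unfolding i1 i2 ..
  also have "\<dots> = - l' / (2 * sqrt (q t))"
  proof -
    have "l' - l t * l' / sqrt (q t) = - l' * (l t - sqrt (q t)) / sqrt (q t)" using sp by (simp add: field_simps)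
    then show ?thesis using ls sp by simp
  qed
  also have "\<dots> = real n * (l t - b) / sqrt (q t)" unfolding l'_def by simp
  finally show ?thesis using dx by simp
qed

lemma w_facts:
  assumes t: "t \<le> tstar"
  shows "l t = ((l t - sqrt (q t)) + D^2 / (l t - sqrt (q t))) / 2"
    and "sqrt (q t) = (D^2 / (l t - sqrt (q t)) - (l t - sqrt (q t))) / 2"
proof -
  have ls: "l t - sqrt (q t) > 0" using s_lt[OF t] by simp
  have "D^2 / (l t - sqrt (q t)) = l t + sqrt (q t)" using prodD[OF t] ls by (simp add: field_simps)
  then show "l t = ((l t - sqrt (q t)) + D^2 / (l t - sqrt (q t))) / 2"
    and "sqrt (q t) = (D^2 / (l t - sqrt (q t)) - (l t - sqrt (q t))) / 2" by simp_all
qed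

lemma w_lt: "t < tstar \<Longrightarrow> l t - sqrt (q t) < D"
proof -
  assume t: "t < tstar"
  have ls: "l t - sqrt (q t) > 0" using s_lt t by simp
  have sp: "sqrt (q t) > 0" using q_gt[OF t] by simp
  have "l t + sqrt (q t) > D" using l_gt[OF t] sp by linarith
  then have "D * (l t - sqrt (q t)) < (l t + sqrt (q t)) * (l t - sqrt (q t))" using ls by simp
  also have "\<dots> = D * D" using prodD[of t] t by (simp add: power2_eq_square mult.commute)
  finally show ?thesis using Dpos by simp
qed

lemma w_ts: "l tstar - sqrt (q tstar) = D" using l_ts q_ts by simp

lemma E_w: "t \<le> tstar \<Longrightarrow> E t = (l t - sqrt (q t)) / (k1 + 1/k1 - 2)"
  by (simp only: E_def) (simp add: a_def k2)

lemma c1_form: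
  assumes t: "t \<le> tstar"
  shows "cosh (xi0 t) - k1 * sinh (xi0 t) = (k1^2 - 1 - (l t - sqrt (q t)) * k1) / (k1 - 1) / (2 * exp (xi0 t))"
proof -
  have "2 * xi0 t = 2 * xi0 t" ..
  have "cosh (xi0 t) - k1 * sinh (xi0 t) = ((exp (2 * xi0 t) + 1) - k1 * (exp (2 * xi0 t) - 1)) / (2 * exp (xi0 t))"
    by (rule K_X(2))
  also have "\<dots> = (k1^2 - 1 - (l t - sqrt (q t)) * k1) / (k1 - 1) / (2 * exp (xi0 t))"
    unfolding exp_xi0[OF t] using den_aux[OF k1 E_w[OF t]] by simp
  finally show ?thesis .
qed

lemma c1_pos: "t < tstar \<Longrightarrow> cosh (xi0 t) - k1 * sinh (xi0 t) > 0"
proof -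
  assume t: "t < tstar"
  have "(l t - sqrt (q t)) * k1 < D * k1" using w_lt[OF t] k1 by simp
  also have "\<dots> = k1^2 - 1" unfolding Dk using k1 by simp
  finally have "k1^2 - 1 - (l t - sqrt (q t)) * k1 > 0" by simp
  then have "(k1^2 - 1 - (l t - sqrt (q t)) * k1) / (k1 - 1) / (2 * exp (xi0 t)) > 0"
    using k1 by (intro divide_pos_pos) auto
  then show ?thesis using c1_form[of t] t by simp
qed

lemma c1_ts: "cosh (xi0 tstar) - k1 * sinh (xi0 tstar) = 0"
proof -
  have "D * k1 = k1^2 - 1" unfolding Dk using k1 by simp
  then show ?thesis unfolding c1_form[OF order_refl] w_ts by simp
qed

lemma ode:
  assumes t: "t < tstar"
  shows "real n * (l t - b) / sqrt (q t) =
    real m1 * ((k1 * cosh (xi0 t) - sinh (xi0 t)) / (cosh (xi0 t) - k1 * sinh (xi0 t))) +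
    real m2 * ((k2 * cosh (xi0 t) - sinh (xi0 t)) / (cosh (xi0 t) - k2 * sinh (xi0 t)))"
proof -
  have tl: "t \<le> tstar" using t by simp
  define w where "w = l t - sqrt (q t)"
  have w0: "0 < w" unfolding w_def using s_lt[OF tl] by simp
  have DD: "D = k1 - 1/k1" by (simp only: D_def) (simp add: k2)
  have wD: "w < k1 - 1/k1" unfolding w_def using w_lt[OF t] unfolding DD .
  have m: "real m1 > 0" "real m2 > 0" using m1 m2 by auto
  note A = ode_alg[OF k1 w0 wD m]
  have lw: "l t = (w + (k1 - 1/k1)^2 / w) / 2" using w_facts(1)[OF tl] unfolding w_def[symmetric] DD .
  have sw: "sqrt (q t) = ((k1 - 1/k1)^2 / w - w) / 2" using w_facts(2)[OF tl] unfolding w_def[symmetric] DD .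
  have bw: "b = - (real m1 - real m2) / (real m1 + real m2) * (k1 - 1/k1)" unfolding b_def nr(1) k2 ..
  have Xw: "exp (2 * xi0 t) = w / (k1 + 1/k1 - 2)" unfolding exp_xi0[OF tl] E_w[OF tl] w_def ..
  show ?thesis unfolding K_X(1) Xw nr(1) unfolding lw sw bw k2 using A by simp
qed

end


lemma vec_deriv:
  fixes A B :: "'a::real_normed_vector"
  assumes d: "(\<xi> has_real_derivative d) (at t)"
  shows "((\<lambda>s. cosh (\<xi> s) *\<^sub>R A + sinh (\<xi> s) *\<^sub>R B) has_vector_derivative
           d *\<^sub>R (sinh (\<xi> t) *\<^sub>R A + cosh (\<xi> t) *\<^sub>R B)) (at t within S)"
proof -
  have c: "((\<lambda>s. cosh (\<xi> s)) has_real_derivative sinh (\<xi> t) * d) (at t within S)"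
    using has_field_derivative_cosh[OF d] by (rule has_field_derivative_at_within)
  have s: "((\<lambda>s. sinh (\<xi> s)) has_real_derivative cosh (\<xi> t) * d) (at t within S)"
    using has_field_derivative_sinh[OF d] by (rule has_field_derivative_at_within)
  have "((\<lambda>s. cosh (\<xi> s) *\<^sub>R A + sinh (\<xi> s) *\<^sub>R B) has_vector_derivative
      ((cosh (\<xi> t) *\<^sub>R 0 + (sinh (\<xi> t) * d) *\<^sub>R A) + (sinh (\<xi> t) *\<^sub>R 0 + (cosh (\<xi> t) * d) *\<^sub>R B))) (at t within S)"
    by (rule has_vector_derivative_add[OF has_vector_derivative_scaleR[OF c has_vector_derivative_const]
          has_vector_derivative_scaleR[OF s has_vector_derivative_const]])
  then show ?thesis by (simp add: scaleR_add_right mult.commute)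
qed

theorem proposition4:
  fixes U :: "'m::euclidean_space set" and F N :: "'m \<Rightarrow> real \<times> 'v::euclidean_space"
    and m1 m2 n :: nat and \<kappa>1 \<kappa>2 :: real
  assumes "n = m1 + m2" and "m1 \<ge> 1" and "m2 \<ge> 1"
    and "DIM('m) = n" and "DIM('v) = n + 1"
    and "immersion_H U F" and "unit_normal U F N"
    and "\<kappa>1 > 1" and "\<kappa>1 * \<kappa>2 = 1"
    and "\<forall>p\<in>U. dim (princ_eigenspace F N p \<kappa>1) = m1 \<and> dim (princ_eigenspace F N p \<kappa>2) = m2"
  defines "a \<equiv> \<kappa>1 + \<kappa>2"
    and "b \<equiv> - (real m1 - real m2) / real n * (\<kappa>1 - \<kappa>2)"
  defines "l \<equiv> \<lambda>t::real. (a - b) * exp (- 2 * real n * t) + b"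
  defines "q \<equiv> \<lambda>t::real. (l t)\<^sup>2 - a\<^sup>2 + 4"
    and "tstar \<equiv> 1 / (2 * real n) * ln ((real m1 * \<kappa>1\<^sup>2 + real m2) / (real m1 * (\<kappa>1\<^sup>2 - 1)))"
  shows "(\<exists>\<xi>::real \<Rightarrow> real. \<forall>t\<le>tstar.
            cosh (2 * \<xi> t) = (a * l t - 2 * sqrt (q t)) / (a\<^sup>2 - 4) \<and>
            sinh (2 * \<xi> t) = (2 * l t - a * sqrt (q t)) / (a\<^sup>2 - 4))
       \<and> (\<forall>\<xi>::real \<Rightarrow> real. (\<forall>t\<le>tstar.
            cosh (2 * \<xi> t) = (a * l t - 2 * sqrt (q t)) / (a\<^sup>2 - 4) \<and>
            sinh (2 * \<xi> t) = (2 * l t - a * sqrt (q t)) / (a\<^sup>2 - 4)) \<longrightarrow>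
          mcf_solution U {..<tstar} (\<lambda>x t. cosh (\<xi> t) *\<^sub>R F x + sinh (\<xi> t) *\<^sub>R N x) F
          \<and> (\<forall>x\<in>U. (\<lambda>y. cosh (\<xi> tstar) *\<^sub>R F y + sinh (\<xi> tstar) *\<^sub>R N y) differentiable (at x)
                 \<and> dim (range (frechet_derivative
                      (\<lambda>y. cosh (\<xi> tstar) *\<^sub>R F y + sinh (\<xi> tstar) *\<^sub>R N y) (at x))) = m2))"
proof -
  interpret an: ana m1 m2 n \<kappa>1 \<kappa>2 a b tstar l q
    by unfold_locales (use assms in auto)
  have k12: "\<kappa>1 \<noteq> \<kappa>2" using an.k2b assms(8) by auto
  interpret cy: cyl U F N \<kappa>1 \<kappa>2
    by unfold_locales (use assms(1,4-7,10) k12 in auto)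
  have c2: "cosh y - \<kappa>2 * sinh y \<noteq> 0" for y using c2_pos[OF an.k2b, of y] by simp
  have dm: "dim (princ_eigenspace F N p \<kappa>1) = m1" "dim (princ_eigenspace F N p \<kappa>2) = m2"
    if "p \<in> U" for p using assms(10) that by auto
  show ?thesis
  proof (intro conjI allI impI)
    show "\<exists>\<xi>::real \<Rightarrow> real. \<forall>t\<le>tstar.
            cosh (2 * \<xi> t) = (a * l t - 2 * sqrt (q t)) / (a\<^sup>2 - 4) \<and>
            sinh (2 * \<xi> t) = (2 * l t - a * sqrt (q t)) / (a\<^sup>2 - 4)"
      using an.xi0_ok by blast
    fix \<xi> :: "real \<Rightarrow> real"
    assume H: "\<forall>t\<le>tstar.
            cosh (2 * \<xi> t) = (a * l t - 2 * sqrt (q t)) / (a\<^sup>2 - 4) \<and>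
            sinh (2 * \<xi> t) = (2 * l t - a * sqrt (q t)) / (a\<^sup>2 - 4)"
    have xe: "\<xi> t = an.xi0 t" if "t \<le> tstar" for t
      using an.uniq[OF that] H that by blast
    have c1: "cosh (\<xi> t) - \<kappa>1 * sinh (\<xi> t) \<noteq> 0" if "t < tstar" for t
      using an.c1_pos[OF that] xe[of t] that by simp
    have c1ts: "cosh (\<xi> tstar) - \<kappa>1 * sinh (\<xi> tstar) = 0"
      using an.c1_ts xe[of tstar] by simp
    have I0: "0 \<in> {..<tstar}" using an.ts_pos by simp
    have init: "\<forall>x\<in>U. cosh (\<xi> 0) *\<^sub>R F x + sinh (\<xi> 0) *\<^sub>R N x = F x"
      using xe[of 0] an.xi0_0 an.ts_pos by simp
    have flow: "\<forall>t\<in>{..<tstar}.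
        immersion_H U (\<lambda>x. cosh (\<xi> t) *\<^sub>R F x + sinh (\<xi> t) *\<^sub>R N x) \<and>
        unit_normal U (\<lambda>x. cosh (\<xi> t) *\<^sub>R F x + sinh (\<xi> t) *\<^sub>R N x)
                      (\<lambda>x. sinh (\<xi> t) *\<^sub>R F x + cosh (\<xi> t) *\<^sub>R N x) \<and>
        (\<forall>x\<in>U. ((\<lambda>s. cosh (\<xi> s) *\<^sub>R F x + sinh (\<xi> s) *\<^sub>R N x) has_vector_derivative
           (mean_curvature (\<lambda>y. cosh (\<xi> t) *\<^sub>R F y + sinh (\<xi> t) *\<^sub>R N y)
              (\<lambda>y. sinh (\<xi> t) *\<^sub>R F y + cosh (\<xi> t) *\<^sub>R N y) x *\<^sub>R
            (sinh (\<xi> t) *\<^sub>R F x + cosh (\<xi> t) *\<^sub>R N x))) (at t within {..<tstar}))"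
    proof (intro ballI conjI)
      fix t assume "t \<in> {..<tstar}"
      then have t: "t < tstar" by simp
      show "immersion_H U (\<lambda>x. cosh (\<xi> t) *\<^sub>R F x + sinh (\<xi> t) *\<^sub>R N x)"
        by (rule cy.Fh_imm[OF c1[OF t] c2])
      show "unit_normal U (\<lambda>x. cosh (\<xi> t) *\<^sub>R F x + sinh (\<xi> t) *\<^sub>R N x)
                      (\<lambda>x. sinh (\<xi> t) *\<^sub>R F x + cosh (\<xi> t) *\<^sub>R N x)"
        by (rule cy.Nh_normal)
      fix x assume x: "x \<in> U"
      define d where "d = real n * (l t - b) / sqrt (q t)"
      have dxi: "(\<xi> has_real_derivative d) (at t)"
        unfolding d_def
        by (rule has_field_derivative_transform_within_open[OF an.xi0_deriv[OF t] open_lessThan])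
           (use t xe in auto)
      have vd: "((\<lambda>s. cosh (\<xi> s) *\<^sub>R F x + sinh (\<xi> s) *\<^sub>R N x) has_vector_derivative
           d *\<^sub>R (sinh (\<xi> t) *\<^sub>R F x + cosh (\<xi> t) *\<^sub>R N x)) (at t within {..<tstar})"
        by (rule vec_deriv[OF dxi])
      have "mean_curvature (\<lambda>y. cosh (\<xi> t) *\<^sub>R F y + sinh (\<xi> t) *\<^sub>R N y)
              (\<lambda>y. sinh (\<xi> t) *\<^sub>R F y + cosh (\<xi> t) *\<^sub>R N y) x =
          real m1 * ((\<kappa>1 * cosh (\<xi> t) - sinh (\<xi> t)) / (cosh (\<xi> t) - \<kappa>1 * sinh (\<xi> t))) +
          real m2 * ((\<kappa>2 * cosh (\<xi> t) - sinh (\<xi> t)) / (cosh (\<xi> t) - \<kappa>2 * sinh (\<xi> t)))"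
        using cy.mean_h[OF c1[OF t] c2 x] dm[OF x] assms(2,3) by simp
      also have "\<dots> = d" unfolding d_def an.ode[OF t] using xe[of t] t by simp
      finally show "((\<lambda>s. cosh (\<xi> s) *\<^sub>R F x + sinh (\<xi> s) *\<^sub>R N x) has_vector_derivative
           (mean_curvature (\<lambda>y. cosh (\<xi> t) *\<^sub>R F y + sinh (\<xi> t) *\<^sub>R N y)
              (\<lambda>y. sinh (\<xi> t) *\<^sub>R F y + cosh (\<xi> t) *\<^sub>R N y) x *\<^sub>R
            (sinh (\<xi> t) *\<^sub>R F x + cosh (\<xi> t) *\<^sub>R N x))) (at t within {..<tstar})"
        using vd by simp
    qed
    show "mcf_solution U {..<tstar} (\<lambda>x t. cosh (\<xi> t) *\<^sub>R F x + sinh (\<xi> t) *\<^sub>R N x) F"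
      unfolding mcf_solution_def
      using I0 init flow by (intro conjI exI[of _ "\<lambda>x t. sinh (\<xi> t) *\<^sub>R F x + cosh (\<xi> t) *\<^sub>R N x"]) auto
    show "\<forall>x\<in>U. (\<lambda>y. cosh (\<xi> tstar) *\<^sub>R F y + sinh (\<xi> tstar) *\<^sub>R N y) differentiable (at x)
                 \<and> dim (range (frechet_derivative
                      (\<lambda>y. cosh (\<xi> tstar) *\<^sub>R F y + sinh (\<xi> tstar) *\<^sub>R N y) (at x))) = m2"
    proof
      fix x assume x: "x \<in> U"
      show "(\<lambda>y. cosh (\<xi> tstar) *\<^sub>R F y + sinh (\<xi> tstar) *\<^sub>R N y) differentiable (at x)
                 \<and> dim (range (frechet_derivative
                      (\<lambda>y. cosh (\<xi> tstar) *\<^sub>R F y + sinh (\<xi> tstar) *\<^sub>R N y) (at x))) = m2"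
        using cy.Fh_deriv[OF x, where x = "\<xi> tstar"] cy.collapse_dim[OF c1ts c2 x] dm[OF x]
        by (auto simp: differentiable_def)
    qed
  qed
qed

end
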